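(* Let $c\in\mathbb{R}$, $g\in\mathbb{R}^d$, let $\mathbf{H}\in\mathbb{R}^{d\times d}$ be symmetric, let $w^t\in\mathbb{R}^d$, and define $$q(w)=c+\langle g,w-w^t\rangle+\tfrac12\langle\mathbf{H}(w-w^t),w-w^t\rangle .$$ Assume $q$ has at least one root and let $w_q^*$ be a root of $q$ of least Euclidean norm, i.e. $w_q^*\in\arg\min\{\|w\|^2: q(w)=0\}$. Define the Newton–Raphson iterates $w^0=w^t$ and $$w^{i+1}=w^i-\frac{q(w^i)}{\|\nabla q(w^i)\|^2}\nabla q(w^i),\qquad i\ge0,$$ assuming $\nabla q(w^i)\neq0$ for all $i$. If $g\in\operatorname{Range}(\mathbf{H})$ and $w^0\in\operatorname{Range}(\mathbf{H})$, then $w^i\in\operatorname{Range}(\mathbf{H})$ and $\nabla q(w^i)\in\operatorname{Range}(\mathbf{H})$ for all $i$, and $w_q^*\in\operatorname{Range}(\mathbf{H})$.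
   Context: In the paper $c=f_i(w^t)$, $g=\nabla f_i(w^t)$, $\mathbf{H}=\nabla^2 f_i(w^t)$ for a twice differentiable loss $f_i$; the statement holds for arbitrary such data. *)

theory Defs
  imports "HOL-Analysis.Analysis"
begin

definition qmodel :: "real \<Rightarrow> real^'d \<Rightarrow> real^'d^'d \<Rightarrow> real^'d \<Rightarrow> real^'d \<Rightarrow> real" where
  "qmodel c g H wt w = c + g \<bullet> (w - wt) + (1/2) * ((H *v (w - wt)) \<bullet> (w - wt))"

text \<open>Gradient of q at w (for symmetric H): g + H (w - wt).\<close>
definition qgrad :: "real^'d \<Rightarrow> real^'d^'d \<Rightarrow> real^'d \<Rightarrow> real^'d \<Rightarrow> real^'d" where
  "qgrad g H wt w = g + H *v (w - wt)"

definition mat_range :: "real^'d^'d \<Rightarrow> (real^'d) set" where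
  "mat_range H = range (\<lambda>x. H *v x)"

end

theory Submission
  imports Defs
begin

lemma symdot:
  fixes H :: "real^'d^'d"
  assumes "transpose H = H"
  shows "(H *v x) \<bullet> y = x \<bullet> (H *v y)"
  by (metis assms dot_lmul_matrix vector_transpose_matrix)

lemma range_subspace: "subspace (mat_range (H::real^'d^'d))"
  unfolding mat_range_def
  by (rule linear_subspace_image[OF matrix_vector_mul_linear subspace_UNIV])

lemma range_in: "H *v x \<in> mat_range H"
  unfolding mat_range_def by blast

theorem lemma6:
  fixes c :: real and g wt wq :: "real^'d" and H :: "real^'d^'d" and w :: "nat \<Rightarrow> real^'d"
  assumes symH: "transpose H = H"
    and root: "qmodel c g H wt wq = 0"
    and minnorm: "\<forall>v. qmodel c g H wt v = 0 \<longrightarrow> (norm wq)\<^sup>2 \<le> (norm v)\<^sup>2"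
    and w0: "w 0 = wt"
    and wSuc: "\<forall>i. w (Suc i) = w i - (qmodel c g H wt (w i) / (norm (qgrad g H wt (w i)))\<^sup>2)
                                       *\<^sub>R qgrad g H wt (w i)"
    and gradnz: "\<forall>i. qgrad g H wt (w i) \<noteq> 0"
    and g_range: "g \<in> mat_range H"
    and w0_range: "w 0 \<in> mat_range H"
  shows "(\<forall>i. w i \<in> mat_range H \<and> qgrad g H wt (w i) \<in> mat_range H) \<and> wq \<in> mat_range H"
proof -
  let ?S = "mat_range H"
  have sub: "subspace ?S" by (rule range_subspace)
  have wt_r: "wt \<in> ?S" using w0 w0_range by simp
  have gr: "qgrad g H wt v \<in> ?S" if "v \<in> ?S" for v
    unfolding qgrad_def using sub g_range range_in by (metis subspace_add)
  have wi: "w i \<in> ?S" for i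
  proof (induction i)
    case 0 then show ?case using w0_range by simp
  next
    case (Suc i)
    then show ?case using wSuc gr[OF Suc] sub
      by (metis subspace_diff subspace_scale)
  qed
  have part1: "\<forall>i. w i \<in> ?S \<and> qgrad g H wt (w i) \<in> ?S" using wi gr by blast
  have spanS: "span ?S = ?S" using sub by (simp add: span_eq_iff)
  obtain p n where p: "p \<in> span ?S" and n: "\<And>v. v \<in> span ?S \<Longrightarrow> orthogonal n v"
    and wq: "wq = p + n"
    using orthogonal_subspace_decomp_exists[of ?S wq] by blast
  have pS: "p \<in> ?S" using p spanS by simp
  have nort: "n \<bullet> v = 0" if "v \<in> ?S" for v using n[of v] that spanS by (simp add: orthogonal_def)
  have Hn: "H *v n = 0"
  proof -
    have "(H *v n) \<bullet> (H *v n) = n \<bullet> (H *v (H *v n))" by (rule symdot[OF symH])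
    also have "\<dots> = 0" using nort range_in by blast
    finally show ?thesis by simp
  qed
  have gn: "g \<bullet> n = 0" using nort g_range by (simp add: inner_commute)
  have e1: "H *v (wq - wt) = H *v (p - wt)"
    using Hn wq by (simp add: matrix_vector_mult_diff_distrib matrix_vector_right_distrib)
  have e2: "(H *v (p - wt)) \<bullet> n = 0"
    using nort[OF range_in[of H "p - wt"]] by (simp add: inner_commute)
  have "qmodel c g H wt wq = qmodel c g H wt p"
    unfolding qmodel_def e1 using wq gn e2
    by (simp add: inner_diff_right inner_add_right inner_diff_left inner_add_left)
  then have "(norm wq)\<^sup>2 \<le> (norm p)\<^sup>2" using minnorm root by simp
  moreover have "(norm wq)\<^sup>2 = (norm p)\<^sup>2 + (norm n)\<^sup>2"
    using wq nort[OF pS] by (simp add: power2_norm_eq_inner inner_add_left inner_add_right inner_commute)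
  ultimately have "n = 0" by simp
  then show ?thesis using part1 pS wq by simp
qed

end
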